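(* Every perinormal domain is weakly normal (and hence seminormal).
   Context: All rings are commutative with identity; "local" means having a unique maximal ideal; an overring of a domain $R$ is a ring between $R$ and its fraction field. A ring extension $A \subseteq B$ satisfies going-down if whenever $\mathfrak{p} \subset \mathfrak{q}$ are primes of $A$ and $Q$ is a prime of $B$ with $Q \cap A = \mathfrak{q}$, there is a prime $P \subseteq Q$ of $B$ with $P \cap A = \mathfrak{p}$. A domain $R$ is perinormal if every local overring $S$ of $R$ such that $R \subseteq S$ satisfies going-down is a localization of $R$. A domain $R$ is weakly normal if for every integral overring $S$ of $R$ such that $\operatorname{Spec} S \to \operatorname{Spec} R$ is a bijection and, for every $P \in \operatorname{Spec} S$ with $\mathfrak{p} = P \cap R$, the residue field extension $R_{\mathfrak{p}}/\mathfrak{p}R_{\mathfrak{p}} \to S_P/PS_P$ is purely inseparable, one has $S = R$. A domain $R$ is seminormal if whenever $x$ in its fraction field satisfies $x^2, x^3 \in R$, then $x \in R$. *)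

theory Defs
  imports Main
begin

text \<open>Domains are represented as subrings R of a field (type 'a); the fraction
field of R is realised inside 'a as the set of quotients a/b.\<close>

definition is_subring :: "'a::field set \<Rightarrow> bool" where
  "is_subring S \<longleftrightarrow> 0 \<in> S \<and> 1 \<in> S \<and>
     (\<forall>a\<in>S. \<forall>b\<in>S. a + b \<in> S \<and> a - b \<in> S \<and> a * b \<in> S)"

definition frac :: "'a::field set \<Rightarrow> 'a set" where
  "frac R = {a / b | a b. a \<in> R \<and> b \<in> R \<and> b \<noteq> 0}"

definition overring :: "'a::field set \<Rightarrow> 'a set \<Rightarrow> bool" where
  "overring R S \<longleftrightarrow> is_subring S \<and> R \<subseteq> S \<and> S \<subseteq> frac R"

definition is_ideal :: "'a::field set \<Rightarrow> 'a set \<Rightarrow> bool" where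
  "is_ideal S I \<longleftrightarrow> I \<subseteq> S \<and> 0 \<in> I \<and> (\<forall>a\<in>I. \<forall>b\<in>I. a + b \<in> I) \<and>
     (\<forall>s\<in>S. \<forall>a\<in>I. s * a \<in> I)"

definition prime_ideal :: "'a::field set \<Rightarrow> 'a set \<Rightarrow> bool" where
  "prime_ideal S P \<longleftrightarrow> is_ideal S P \<and> 1 \<notin> P \<and>
     (\<forall>a\<in>S. \<forall>b\<in>S. a * b \<in> P \<longrightarrow> a \<in> P \<or> b \<in> P)"

definition maximal_ideal :: "'a::field set \<Rightarrow> 'a set \<Rightarrow> bool" where
  "maximal_ideal S M \<longleftrightarrow> is_ideal S M \<and> M \<noteq> S \<and>
     (\<forall>J. is_ideal S J \<and> M \<subseteq> J \<longrightarrow> J = M \<or> J = S)"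

definition local_ring :: "'a::field set \<Rightarrow> bool" where
  "local_ring S \<longleftrightarrow> (\<exists>!M. maximal_ideal S M)"

definition going_down :: "'a::field set \<Rightarrow> 'a set \<Rightarrow> bool" where
  "going_down A B \<longleftrightarrow> (\<forall>p q Q. prime_ideal A p \<and> prime_ideal A q \<and> p \<subset> q \<and>
     prime_ideal B Q \<and> Q \<inter> A = q \<longrightarrow> (\<exists>P. prime_ideal B P \<and> P \<subseteq> Q \<and> P \<inter> A = p))"

definition mult_closed :: "'a::field set \<Rightarrow> 'a set \<Rightarrow> bool" where
  "mult_closed R T \<longleftrightarrow> T \<subseteq> R \<and> 1 \<in> T \<and> 0 \<notin> T \<and> (\<forall>a\<in>T. \<forall>b\<in>T. a * b \<in> T)"

text \<open>Localization of R at a multiplicative set T (inside the fraction field);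
 with I an ideal, loc_ideal I T is the extended ideal I T\<inverse>R.\<close>
definition loc_ideal :: "'a::field set \<Rightarrow> 'a set \<Rightarrow> 'a set" where
  "loc_ideal I T = {a / s | a s. a \<in> I \<and> s \<in> T}"

definition is_localization :: "'a::field set \<Rightarrow> 'a set \<Rightarrow> bool" where
  "is_localization R S \<longleftrightarrow> (\<exists>T. mult_closed R T \<and> S = loc_ideal R T)"

definition perinormal :: "'a::field set \<Rightarrow> bool" where
  "perinormal R \<longleftrightarrow> (\<forall>S. overring R S \<and> local_ring S \<and> going_down R S
      \<longrightarrow> is_localization R S)"

definition integral_over :: "'a::field set \<Rightarrow> 'a \<Rightarrow> bool" where
  "integral_over R x \<longleftrightarrow> (\<exists>n c. (\<forall>i<n. c i \<in> R) \<and> x ^ n + (\<Sum>i<n. c i * x ^ i) = 0)"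

text \<open>Characteristic of the residue field A/m (A local with maximal ideal m),
 and its characteristic exponent (1 in characteristic 0).\<close>
definition res_char :: "'a::field set \<Rightarrow> nat" where
  "res_char m = (if \<exists>n>0. of_nat n \<in> m then LEAST n. n > 0 \<and> of_nat n \<in> m else 0)"

definition char_exp :: "'a::field set \<Rightarrow> nat" where
  "char_exp m = (if res_char m = 0 then 1 else res_char m)"

text \<open>The residue field extension R_p/pR_p \<rightarrow> S_P/PS_P (p = P \<inter> R) is purely
 inseparable: every element of S_P/PS_P has a q-th power (q a power of the
 characteristic exponent) lying in (the image of) R_p/pR_p.\<close>
definition residue_purely_insep :: "'a::field set \<Rightarrow> 'a set \<Rightarrow> 'a set \<Rightarrow> bool" where
  "residue_purely_insep R S P \<longleftrightarrow>
     (let p = P \<inter> R; A = loc_ideal R (R - p); m = loc_ideal p (R - p);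
          B = loc_ideal S (S - P); N = loc_ideal P (S - P)
      in \<forall>x\<in>B. \<exists>y\<in>A. \<exists>e::nat. x ^ (char_exp m ^ e) - y \<in> N)"

definition weakly_normal :: "'a::field set \<Rightarrow> bool" where
  "weakly_normal R \<longleftrightarrow> (\<forall>S. overring R S \<and> (\<forall>x\<in>S. integral_over R x) \<and>
      bij_betw (\<lambda>P. P \<inter> R) {P. prime_ideal S P} {p. prime_ideal R p} \<and>
      (\<forall>P. prime_ideal S P \<longrightarrow> residue_purely_insep R S P)
      \<longrightarrow> S = R)"

definition seminormal :: "'a::field set \<Rightarrow> bool" where
  "seminormal R \<longleftrightarrow> (\<forall>x\<in>frac R. x ^ 2 \<in> R \<and> x ^ 3 \<in> R \<longrightarrow> x \<in> R)"

end

theory Submission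
  imports Defs
begin


lemma sub_0: "is_subring S \<Longrightarrow> 0 \<in> S" by (simp add: is_subring_def)
lemma sub_1: "is_subring S \<Longrightarrow> 1 \<in> S" by (simp add: is_subring_def)
lemma sub_add: "is_subring S \<Longrightarrow> a \<in> S \<Longrightarrow> b \<in> S \<Longrightarrow> a + b \<in> S" by (simp add: is_subring_def)
lemma sub_diff: "is_subring S \<Longrightarrow> a \<in> S \<Longrightarrow> b \<in> S \<Longrightarrow> a - b \<in> S" by (simp add: is_subring_def)
lemma sub_mult: "is_subring S \<Longrightarrow> a \<in> S \<Longrightarrow> b \<in> S \<Longrightarrow> a * b \<in> S" by (simp add: is_subring_def)
lemma sub_uminus: "is_subring S \<Longrightarrow> a \<in> S \<Longrightarrow> - a \<in> S"
  using sub_diff[of S 0 a] sub_0[of S] by simp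
lemma sub_power: "is_subring S \<Longrightarrow> a \<in> S \<Longrightarrow> a ^ n \<in> S"
  by (induction n) (simp_all add: sub_1 sub_mult)
lemma sub_sum: "is_subring S \<Longrightarrow> (\<And>i. i < (n::nat) \<Longrightarrow> f i \<in> S) \<Longrightarrow> (\<Sum>i<n. f i) \<in> S"
  by (induction n) (simp_all add: sub_0 sub_add)

lemma id_sub: "is_ideal S I \<Longrightarrow> a \<in> I \<Longrightarrow> a \<in> S" by (auto simp: is_ideal_def)
lemma id_0: "is_ideal S I \<Longrightarrow> 0 \<in> I" by (auto simp: is_ideal_def)
lemma id_add: "is_ideal S I \<Longrightarrow> a \<in> I \<Longrightarrow> b \<in> I \<Longrightarrow> a + b \<in> I" by (auto simp: is_ideal_def)
lemma id_mult: "is_ideal S I \<Longrightarrow> s \<in> S \<Longrightarrow> a \<in> I \<Longrightarrow> s * a \<in> I" by (auto simp: is_ideal_def)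
lemma id_mult2: "is_ideal S I \<Longrightarrow> s \<in> S \<Longrightarrow> a \<in> I \<Longrightarrow> a * s \<in> I"
  using id_mult[of S I s a] by (simp add: mult.commute)
lemma id_uminus: "is_subring S \<Longrightarrow> is_ideal S I \<Longrightarrow> a \<in> I \<Longrightarrow> - a \<in> I"
  using id_mult[of S I "-1" a] sub_uminus[OF _ sub_1] by force
lemma id_diff: "is_subring S \<Longrightarrow> is_ideal S I \<Longrightarrow> a \<in> I \<Longrightarrow> b \<in> I \<Longrightarrow> a - b \<in> I"
  using id_add[of S I a "-b"] id_uminus[of S I b] by simp
lemma id_sum: "is_ideal S I \<Longrightarrow> (\<And>i. i < (n::nat) \<Longrightarrow> f i \<in> I) \<Longrightarrow> (\<Sum>i<n. f i) \<in> I"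
  by (induction n) (simp_all add: id_0 id_add)
lemma id_one: "is_ideal S I \<Longrightarrow> 1 \<in> I \<Longrightarrow> s \<in> S \<Longrightarrow> s \<in> I"
  using id_mult[of S I s 1] by simp

lemma prime_power: "prime_ideal S P \<Longrightarrow> is_subring S \<Longrightarrow> a \<in> S \<Longrightarrow> a ^ n \<in> P \<Longrightarrow> a \<in> P"
proof (induction n)
  case 0 then show ?case by (simp add: prime_ideal_def)
next
  case (Suc n)
  then show ?case unfolding prime_ideal_def using sub_power[of S a n]
    by (metis power_Suc)
qed

lemma zorn_ideal:
  assumes S: "is_subring A" and I: "is_ideal A I" and T: "T \<subseteq> A" and IT: "I \<inter> T = {}"
  shows "\<exists>Q. is_ideal A Q \<and> I \<subseteq> Q \<and> Q \<inter> T = {} \<and>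
     (\<forall>J. is_ideal A J \<and> Q \<subseteq> J \<and> J \<inter> T = {} \<longrightarrow> J = Q)"
proof -
  let ?F = "{J. is_ideal A J \<and> I \<subseteq> J \<and> J \<inter> T = {}}"
  have "\<forall>C\<in>chains ?F. \<exists>U\<in>?F. \<forall>X\<in>C. X \<subseteq> U"
  proof
    fix C assume C: "C \<in> chains ?F"
    have CF: "C \<subseteq> ?F" using chainsD2[OF C] .
    let ?U = "I \<union> \<Union>C"
    have "is_ideal A ?U" unfolding is_ideal_def
    proof (intro conjI ballI)
      show "?U \<subseteq> A" using id_sub[OF I] id_sub CF by blast
      show "0 \<in> ?U" using id_0[OF I] by blast
    next
      fix a b assume a: "a \<in> ?U" and b: "b \<in> ?U"
      show "a + b \<in> ?U"
      proof -
        have "\<exists>J\<in>?F. a \<in> J \<and> b \<in> J \<and> J \<subseteq> ?U"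
        proof (cases "a \<in> I")
          case True
          then show ?thesis
          proof (cases "b \<in> I")
            case True then show ?thesis using \<open>a \<in> I\<close> I IT by (intro bexI[of _ I]) auto
          next
            case False then obtain J where "J \<in> C" "b \<in> J" using b by auto
            then show ?thesis using CF \<open>a \<in> I\<close> by (intro bexI[of _ J]) auto
          qed
        next
          case False then obtain J where J: "J \<in> C" "a \<in> J" using a by auto
          show ?thesis
          proof (cases "b \<in> I")
            case True then show ?thesis using J CF by (intro bexI[of _ J]) auto
          next
            case False then obtain K where K: "K \<in> C" "b \<in> K" using b by auto
            have JF: "J \<in> ?F" "K \<in> ?F" using J K CF by auto
            from chainsD[OF C J(1) K(1)] show ?thesis
            proof
              assume "J \<subseteq> K" then show ?thesis using JF K J by (intro bexI[of _ K]) auto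
            next
              assume "K \<subseteq> J" then show ?thesis using JF K J by (intro bexI[of _ J]) auto
            qed
          qed
        qed
        then obtain J where "is_ideal A J" "a \<in> J" "b \<in> J" "J \<subseteq> ?U" by blast
        then show ?thesis using id_add[of A J a b] by blast
      qed
    next
      fix s a assume s: "s \<in> A" and a: "a \<in> ?U"
      show "s * a \<in> ?U"
      proof (cases "a \<in> I")
        case True then show ?thesis using id_mult[OF I s] by blast
      next
        case False then obtain J where J: "J \<in> C" "a \<in> J" using a by blast
        then have "is_ideal A J" using CF by blast
        then show ?thesis using id_mult[OF _ s J(2)] J(1) by blast
      qed
    qed
    moreover have "?U \<inter> T = {}" using IT CF by auto
    ultimately show "\<exists>U\<in>?F. \<forall>X\<in>C. X \<subseteq> U" by (intro bexI[of _ ?U]) auto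
  qed
  from Zorn_Lemma2[OF this] obtain M where M: "M \<in> ?F" "\<forall>X\<in>?F. M \<subseteq> X \<longrightarrow> X = M" by blast
  show ?thesis
  proof (intro exI[of _ M] conjI allI impI)
    show "is_ideal A M" "I \<subseteq> M" "M \<inter> T = {}" using M(1) by auto
  next
    fix J assume "is_ideal A J \<and> M \<subseteq> J \<and> J \<inter> T = {}"
    then show "J = M" using M by blast
  qed
qed

lemma maxdisj_ext:
  assumes S: "is_subring A" and Q: "is_ideal A Q"
    and max: "\<forall>J. is_ideal A J \<and> Q \<subseteq> J \<and> J \<inter> T = {} \<longrightarrow> J = Q"
    and a: "a \<in> A" "a \<notin> Q"
  shows "\<exists>t\<in>T. \<exists>x\<in>Q. \<exists>s\<in>A. t = x + a * s"
  proof (rule ccontr)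
    assume nt: "\<not> ?thesis"
    let ?J = "{x + a * s | x s. x \<in> Q \<and> s \<in> A}"
    have "is_ideal A ?J" unfolding is_ideal_def
    proof (intro conjI ballI)
      show "?J \<subseteq> A"
      proof
        fix u assume "u \<in> ?J"
        then obtain x s where "u = x + a*s" "x \<in> Q" "s \<in> A" by blast
        then show "u \<in> A" using sub_add[OF S] sub_mult[OF S] id_sub[OF Q] a by metis
      qed
      show "0 \<in> ?J" using id_0[OF Q] sub_0[OF S] by force
    next
      fix u v assume "u \<in> ?J" "v \<in> ?J"
      then obtain x s y t where "u = x + a*s" "v = y + a*t" "x \<in> Q" "y \<in> Q" "s \<in> A" "t \<in> A" by auto
      then have "u + v = (x+y) + a*(s+t)" "x + y \<in> Q" "s + t \<in> A"
        using id_add[OF Q] sub_add[OF S] by (auto simp: algebra_simps)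
      then show "u + v \<in> ?J" by blast
    next
      fix r u assume r: "r \<in> A" and "u \<in> ?J"
      then obtain x s where "u = x + a*s" "x \<in> Q" "s \<in> A" by auto
      then have "r * u = (r*x) + a*(r*s)" "r*x \<in> Q" "r*s \<in> A"
        using id_mult[OF Q] sub_mult[OF S] r by (auto simp: algebra_simps)
      then show "r * u \<in> ?J" by blast
    qed
    moreover have "Q \<subseteq> ?J"
    proof
      fix x assume "x \<in> Q" then show "x \<in> ?J" using sub_0[OF S] by (intro CollectI exI[of _ x] exI[of _ 0]) simp
    qed
    moreover have "?J \<inter> T = {}" using nt by auto
    ultimately have "?J = Q" using max by blast
    moreover have "a \<in> ?J" using id_0[OF Q] sub_1[OF S] by force
    ultimately show False using a by auto
  qed

lemma maxdisj_prime:
  assumes S: "is_subring A" and Q: "is_ideal A Q" and T: "T \<subseteq> A" and QT: "Q \<inter> T = {}"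
    and T1: "1 \<in> T" and Tm: "\<And>a b. a \<in> T \<Longrightarrow> b \<in> T \<Longrightarrow> a * b \<in> T"
    and max: "\<forall>J. is_ideal A J \<and> Q \<subseteq> J \<and> J \<inter> T = {} \<longrightarrow> J = Q"
  shows "prime_ideal A Q"
proof -
  have ext: "\<exists>t\<in>T. \<exists>x\<in>Q. \<exists>s\<in>A. t = x + a * s" if a: "a \<in> A" "a \<notin> Q" for a
    using maxdisj_ext[OF S Q max a] .
  show ?thesis unfolding prime_ideal_def
  proof (intro conjI ballI impI)
    show "is_ideal A Q" by fact
    show "1 \<notin> Q" using QT T1 by auto
  next
    fix a b assume a: "a \<in> A" and b: "b \<in> A" and ab: "a * b \<in> Q"
    show "a \<in> Q \<or> b \<in> Q"
    proof (rule ccontr)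
      assume "\<not> ?thesis"
      then obtain t x s u y r where t: "t \<in> T" "x \<in> Q" "s \<in> A" "t = x + a*s"
        and u: "u \<in> T" "y \<in> Q" "r \<in> A" "u = y + b*r" using ext a b by meson
      have "t * u = x*y + x*(b*r) + y*(a*s) + (a*b)*(s*r)" using t u by (simp add: algebra_simps)
      also have "\<dots> \<in> Q"
      proof -
        have "x*(b*r) \<in> Q" using t u b id_mult2[OF Q] sub_mult[OF S] by blast
        moreover have "y*(a*s) \<in> Q" using t u a id_mult2[OF Q] sub_mult[OF S] by blast
        moreover have "(a*b)*(s*r) \<in> Q" using t u ab id_mult2[OF Q] sub_mult[OF S] by blast
        moreover have "x*y \<in> Q" using t u id_mult2[OF Q] id_sub[OF Q] by blast
        ultimately show ?thesis using id_add[OF Q] by blast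
      qed
      finally show False using Tm[OF t(1) u(1)] QT by auto
    qed
  qed
qed

lemma pow_diff_ideal:
  assumes S: "is_subring S" and Q: "is_ideal S Q" and y: "y \<in> S" and z: "z \<in> S" and d: "y - z \<in> Q"
  shows "y ^ k - z ^ k \<in> Q"
proof (induction k)
  case 0 then show ?case using id_0[OF Q] by simp
next
  case (Suc k)
  have "y ^ Suc k - z ^ Suc k = y * (y^k - z^k) + z^k * (y - z)" by (simp add: algebra_simps)
  also have "\<dots> \<in> Q" using Suc id_mult[OF Q] id_add[OF Q] y d sub_power[OF S z] by metis
  finally show ?case .
qed

lemma poly_diff_ideal:
  assumes S: "is_subring S" and Q: "is_ideal S Q" and y: "y \<in> S" and z: "z \<in> S" and d: "y - z \<in> Q"
    and c: "\<And>i. i < n \<Longrightarrow> c i \<in> S"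
  shows "(y ^ n + (\<Sum>i<n. c i * y ^ i)) - (z ^ n + (\<Sum>i<n. c i * z ^ i)) \<in> Q"
proof -
  have "(y ^ n + (\<Sum>i<n. c i * y ^ i)) - (z ^ n + (\<Sum>i<n. c i * z ^ i))
     = (y^n - z^n) + (\<Sum>i<n. c i * (y ^ i - z ^ i))"
    by (simp add: algebra_simps sum_subtractf)
  also have "\<dots> \<in> Q"
  proof (rule id_add[OF Q])
    show "y^n - z^n \<in> Q" by (rule pow_diff_ideal[OF S Q y z d])
    show "(\<Sum>i<n. c i * (y ^ i - z ^ i)) \<in> Q"
    proof (rule id_sum[OF Q])
      fix i assume "i < n"
      then show "c i * (y ^ i - z ^ i) \<in> Q" using id_mult[OF Q c pow_diff_ideal[OF S Q y z d]] by blast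
    qed
  qed
  finally show ?thesis .
qed

lemma going_up:
  assumes R: "is_subring R" and S: "is_subring S" and RS: "R \<subseteq> S"
    and int: "\<forall>s\<in>S. integral_over R s"
    and P: "prime_ideal S P" and q: "prime_ideal R q" and Pq: "P \<inter> R \<subseteq> q"
  shows "\<exists>Q. prime_ideal S Q \<and> P \<subseteq> Q \<and> Q \<inter> R = q"
proof -
  let ?T = "R - q"
  have qR: "q \<subseteq> R" using q by (auto simp: prime_ideal_def is_ideal_def)
  have PI: "is_ideal S P" using P by (simp add: prime_ideal_def)
  have TS: "?T \<subseteq> S" using RS by auto
  have PT: "P \<inter> ?T = {}" using Pq by auto
  obtain Q where Q: "is_ideal S Q" "P \<subseteq> Q" "Q \<inter> ?T = {}"
    and max: "\<forall>J. is_ideal S J \<and> Q \<subseteq> J \<and> J \<inter> ?T = {} \<longrightarrow> J = Q"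
    using zorn_ideal[OF S PI TS PT] by blast
  have T1: "1 \<in> ?T" using sub_1[OF R] q by (auto simp: prime_ideal_def)
  have Tm: "a * b \<in> ?T" if "a \<in> ?T" "b \<in> ?T" for a b
    using that q sub_mult[OF R] by (auto simp: prime_ideal_def)
  have QP: "prime_ideal S Q" using maxdisj_prime[OF S Q(1) TS Q(3) T1 Tm max] by blast
  have "q \<subseteq> Q"
  proof
    fix r assume rq: "r \<in> q"
    show "r \<in> Q"
    proof (rule ccontr)
      assume rQ: "r \<notin> Q"
      have rR: "r \<in> R" using rq qR by auto
      have rS: "r \<in> S" using rR RS by auto
      obtain t x s where t: "t \<in> ?T" and x: "x \<in> Q" and s: "s \<in> S" and tx: "t = x + r * s"
        using maxdisj_ext[OF S Q(1) max rS rQ] by blast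
      obtain n c where c: "\<forall>i<n. c i \<in> R" and eq: "s ^ n + (\<Sum>i<n. c i * s ^ i) = 0"
        using int s by (auto simp: integral_over_def)
      define d where "d i = c i * r ^ (n - i)" for i
      have dR: "d i \<in> R" if "i < n" for i using c that sub_mult[OF R] sub_power[OF R rR] by (simp add: d_def)
      have dS: "d i \<in> S" if "i < n" for i using dR[OF that] RS by auto
      have dq: "d i * t ^ i \<in> q" if "i < n" for i
      proof -
        have "r ^ (n - i) = r * r ^ (n - i - 1)" using that by (metis Suc_diff_Suc power_Suc diff_Suc_1 Suc_diff_1 zero_less_diff)
        moreover have qI: "is_ideal R q" using q by (simp add: prime_ideal_def)
        ultimately have rn: "r ^ (n - i) \<in> q"
          using id_mult2[OF qI sub_power[OF R rR] rq] by simp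
        have "c i * t ^ i \<in> R" using c that sub_power[OF R] t sub_mult[OF R] by blast
        then have "(c i * t ^ i) * r ^ (n - i) \<in> q" using id_mult[OF qI _ rn] by blast
        then show ?thesis unfolding d_def by (simp add: algebra_simps)
      qed
      have g0: "(r*s) ^ n + (\<Sum>i<n. d i * (r*s) ^ i) = 0"
      proof -
        have "(r*s) ^ n + (\<Sum>i<n. d i * (r*s) ^ i) = r ^ n * (s ^ n + (\<Sum>i<n. c i * s ^ i))"
        proof -
          have "(\<Sum>i<n. d i * (r*s) ^ i) = (\<Sum>i<n. r ^ n * (c i * s ^ i))"
          proof (rule sum.cong)
            fix i assume "i \<in> {..<n}"
            then have "r ^ n = r ^ (n - i) * r ^ i" by (simp add: power_add[symmetric])
            then show "d i * (r*s) ^ i = r ^ n * (c i * s ^ i)"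
              by (simp add: d_def power_mult_distrib algebra_simps)
          qed simp
          then show ?thesis by (simp add: sum_distrib_left algebra_simps power_mult_distrib)
        qed
        then show ?thesis using eq by simp
      qed
      have tS: "t \<in> S" using t RS by auto
      have rsS: "r * s \<in> S" using sub_mult[OF S rS s] .
      have "t - r * s \<in> Q" using tx x by simp
      from poly_diff_ideal[OF S Q(1) tS rsS this, of n d] dS
      have gQ: "t ^ n + (\<Sum>i<n. d i * t ^ i) \<in> Q" using g0 by simp
      have sq: "(\<Sum>i<n. d i * t ^ i) \<in> q" using id_sum[of R q] dq q by (auto simp: prime_ideal_def)
      have gR: "t ^ n + (\<Sum>i<n. d i * t ^ i) \<in> R"
        using sub_add[OF R] sub_power[OF R] sub_sum[OF R] sub_mult[OF R] dR t by simp
      have gq: "t ^ n + (\<Sum>i<n. d i * t ^ i) \<in> q" using gQ gR Q(3) by blast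
      have "t ^ n \<in> q" using id_diff[OF R _ gq sq] q by (simp add: prime_ideal_def)
      then have "t \<in> q" using prime_power[OF q R] t by blast
      then show False using t by blast
    qed
  qed
  moreover have "Q \<inter> R \<subseteq> q" using Q(3) by blast
  ultimately show ?thesis using QP Q(2) qR by blast
qed



lemma locI: "a \<in> X \<Longrightarrow> s \<in> T \<Longrightarrow> a / s \<in> loc_ideal X T"
  unfolding loc_ideal_def by blast
lemma locE: "y \<in> loc_ideal X T \<Longrightarrow> (\<And>a s. y = a / s \<Longrightarrow> a \<in> X \<Longrightarrow> s \<in> T \<Longrightarrow> thesis) \<Longrightarrow> thesis"
  unfolding loc_ideal_def by blast
lemma locI1: "a \<in> X \<Longrightarrow> 1 \<in> T \<Longrightarrow> a \<in> loc_ideal X T"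
  using locI[of a X 1 T] by simp

lemma fracI: "a \<in> R \<Longrightarrow> b \<in> R \<Longrightarrow> b \<noteq> 0 \<Longrightarrow> a / b \<in> frac R"
  unfolding frac_def by blast
lemma fracE: "y \<in> frac R \<Longrightarrow> (\<And>a b. y = a / b \<Longrightarrow> a \<in> R \<Longrightarrow> b \<in> R \<Longrightarrow> b \<noteq> 0 \<Longrightarrow> thesis) \<Longrightarrow> thesis"
  unfolding frac_def by blast
lemma R_frac: "is_subring R \<Longrightarrow> R \<subseteq> frac R"
  using fracI[of _ R 1] sub_1[of R] by force
lemma frac_div:
  assumes R: "is_subring R" and x: "x \<in> frac R" and y: "y \<in> frac R"
  shows "x / y \<in> frac R"
proof (cases "y = 0")
  case True then show ?thesis using R_frac[OF R] sub_0[OF R] by auto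
next
  case False
  obtain a b where ab: "x = a / b" "a \<in> R" "b \<in> R" "b \<noteq> 0" using x by (rule fracE)
  obtain c d where cd: "y = c / d" "c \<in> R" "d \<in> R" "d \<noteq> 0" using y by (rule fracE)
  have c0: "c \<noteq> 0" using False cd by auto
  have "x / y = (a * d) / (b * c)" unfolding ab(1) cd(1) using ab(4) cd(4) c0 by simp
  moreover have "a * d \<in> R" "b * c \<in> R" "b * c \<noteq> 0" using ab cd c0 sub_mult[OF R] by auto
  ultimately show ?thesis using fracI by metis
qed

locale locM =
  fixes S M :: "'a::field set"
  assumes S: "is_subring S" and M: "prime_ideal S M"
begin

definition "S' = loc_ideal S (S - M)"

lemma MS: "M \<subseteq> S" using M by (auto simp: prime_ideal_def is_ideal_def)
lemma M0: "0 \<in> M" using M by (auto simp: prime_ideal_def is_ideal_def)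
lemma nz: "s \<in> S - M \<Longrightarrow> s \<noteq> 0" using M0 by auto
lemma T1: "1 \<in> S - M" using M sub_1[OF S] by (auto simp: prime_ideal_def)
lemma Tm: "s \<in> S - M \<Longrightarrow> t \<in> S - M \<Longrightarrow> s * t \<in> S - M"
  using M sub_mult[OF S] by (auto simp: prime_ideal_def)

lemma S_S': "S \<subseteq> S'" unfolding S'_def using locI1 T1 by blast
lemma inv_S': "s \<in> S - M \<Longrightarrow> 1 / s \<in> S'" unfolding S'_def using locI sub_1[OF S] by blast

lemma sub_S': "is_subring S'"
  unfolding is_subring_def
proof (intro conjI ballI)
  show "0 \<in> S'" "1 \<in> S'" using S_S' sub_0[OF S] sub_1[OF S] by auto
next
  fix x y assume x: "x \<in> S'" and y: "y \<in> S'"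
  obtain a s where a: "x = a / s" "a \<in> S" "s \<in> S - M" using x unfolding S'_def by (rule locE)
  obtain b t where b: "y = b / t" "b \<in> S" "t \<in> S - M" using y unfolding S'_def by (rule locE)
  have st: "s * t \<in> S - M" using Tm a b by blast
  have nz': "s \<noteq> 0" "t \<noteq> 0" using nz a b by auto
  have "x + y = (a * t + b * s) / (s * t)" using a b nz' by (simp add: field_simps)
  moreover have "a * t + b * s \<in> S" using a b sub_add[OF S] sub_mult[OF S] by auto
  ultimately show "x + y \<in> S'" unfolding S'_def using locI st by metis
  have "x - y = (a * t - b * s) / (s * t)" using a b nz' by (simp add: field_simps)
  moreover have "a * t - b * s \<in> S" using a b sub_diff[OF S] sub_mult[OF S] by auto
  ultimately show "x - y \<in> S'" unfolding S'_def using locI st by metis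
  have "x * y = (a * b) / (s * t)" using a b nz' by (simp add: field_simps)
  moreover have "a * b \<in> S" using a b sub_mult[OF S] by auto
  ultimately show "x * y \<in> S'" unfolding S'_def using locI st by metis
qed

lemma loc_prime:
  assumes P: "prime_ideal S P" and PM: "P \<subseteq> M"
  shows "prime_ideal S' (loc_ideal P (S - M))"
proof -
  let ?P = "loc_ideal P (S - M)"
  have PS: "P \<subseteq> S" using P by (auto simp: prime_ideal_def is_ideal_def)
  have PI: "is_ideal S P" using P by (simp add: prime_ideal_def)
  have ideal: "is_ideal S' ?P" unfolding is_ideal_def
  proof (intro conjI ballI)
    show "?P \<subseteq> S'" unfolding S'_def loc_ideal_def using PS by blast
    show "0 \<in> ?P" using locI1[OF id_0[OF PI] T1] .
  next
    fix x y assume x: "x \<in> ?P" and y: "y \<in> ?P"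
    obtain a s where a: "x = a / s" "a \<in> P" "s \<in> S - M" using x by (rule locE)
    obtain b t where b: "y = b / t" "b \<in> P" "t \<in> S - M" using y by (rule locE)
    have st: "s * t \<in> S - M" using Tm a b by blast
    have nz': "s \<noteq> 0" "t \<noteq> 0" using nz a b by auto
    have "x + y = (a * t + b * s) / (s * t)" using a b nz' by (simp add: field_simps)
    moreover have "a * t + b * s \<in> P" using a b id_add[OF PI] id_mult2[OF PI] by auto
    ultimately show "x + y \<in> ?P" using locI st by metis
  next
    fix y x assume y: "y \<in> S'" and x: "x \<in> ?P"
    obtain a s where a: "x = a / s" "a \<in> P" "s \<in> S - M" using x by (rule locE)
    obtain b t where b: "y = b / t" "b \<in> S" "t \<in> S - M" using y unfolding S'_def by (rule locE)
    have st: "t * s \<in> S - M" using Tm a b by blast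
    have nz': "s \<noteq> 0" "t \<noteq> 0" using nz a b by auto
    have "y * x = (b * a) / (t * s)" using a b nz' by (simp add: field_simps)
    moreover have "b * a \<in> P" using a b id_mult[OF PI] by auto
    ultimately show "y * x \<in> ?P" using locI st by metis
  qed
  show ?thesis unfolding prime_ideal_def
  proof (intro conjI ballI impI)
    show "is_ideal S' ?P" by (rule ideal)
    show "1 \<notin> ?P"
    proof
      assume "1 \<in> ?P"
      then obtain a s where a: "1 = a / s" "a \<in> P" "s \<in> S - M" by (rule locE)
      then have "a = s" using nz[OF a(3)] by (simp add: field_simps)
      then show False using a PM by auto
    qed
  next
    fix x y assume x: "x \<in> S'" and y: "y \<in> S'" and xy: "x * y \<in> ?P"
    obtain a s where a: "x = a / s" "a \<in> S" "s \<in> S - M" using x unfolding S'_def by (rule locE)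
    obtain b t where b: "y = b / t" "b \<in> S" "t \<in> S - M" using y unfolding S'_def by (rule locE)
    obtain c u where c: "x * y = c / u" "c \<in> P" "u \<in> S - M" using xy by (rule locE)
    have nz': "s \<noteq> 0" "t \<noteq> 0" "u \<noteq> 0" using nz a b c by auto
    have "(a * b) / (s * t) = c / u" using a b c by simp
    then have eq: "(a * b) * u = c * (s * t)" using nz' by (simp add: frac_eq_eq)
    have "c * (s * t) \<in> P" using id_mult2[OF PI _ c(2)] Tm a b by blast
    then have "(a * b) * u \<in> P" using eq by simp
    moreover have "a * b \<in> S" using a b sub_mult[OF S] by auto
    moreover have "u \<notin> P" using c PM by auto
    ultimately have "a * b \<in> P" using P c by (auto simp: prime_ideal_def)
    then have "a \<in> P \<or> b \<in> P" using P a b by (auto simp: prime_ideal_def)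
    then show "x \<in> ?P \<or> y \<in> ?P" using a b locI by metis
  qed
qed

definition "N = loc_ideal M (S - M)"

lemma N_prime: "prime_ideal S' N" unfolding N_def using loc_prime[OF M] by blast

lemma unit:
  assumes y: "y \<in> S'" "y \<notin> N" shows "\<exists>z\<in>S'. z * y = 1"
proof -
  obtain a s where a: "y = a / s" "a \<in> S" "s \<in> S - M" using y(1) unfolding S'_def by (rule locE)
  have aM: "a \<notin> M" using a y locI unfolding N_def by metis
  have "s / a \<in> S'" unfolding S'_def using locI a aM by blast
  moreover have "(s / a) * y = 1" using a aM nz M0 by (auto simp: field_simps)
  ultimately show ?thesis by blast
qed

lemma local: "local_ring S'"
proof -
  have NI: "is_ideal S' N" using N_prime by (simp add: prime_ideal_def)
  have N1: "1 \<notin> N" using N_prime by (simp add: prime_ideal_def)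
  have one: "1 \<in> S'" using sub_1[OF sub_S'] .
  have full: "J = S'" if J: "is_ideal S' J" "y \<in> J" "y \<notin> N" for J y
  proof -
    have yS: "y \<in> S'" using J id_sub by blast
    obtain z where z: "z \<in> S'" "z * y = 1" using unit[OF yS J(3)] by blast
    have "1 \<in> J" using id_mult[OF J(1) z(1) J(2)] z by simp
    then have "S' \<subseteq> J" using id_one[OF J(1)] by blast
    then show ?thesis using J(1) by (auto simp: is_ideal_def)
  qed
  have maxN: "maximal_ideal S' N" unfolding maximal_ideal_def
  proof (intro conjI allI impI)
    show "is_ideal S' N" by (rule NI)
    show "N \<noteq> S'" using N1 one by blast
  next
    fix J assume J: "is_ideal S' J \<and> N \<subseteq> J"
    show "J = N \<or> J = S'"
    proof (cases "J \<subseteq> N")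
      case True then show ?thesis using J by blast
    next
      case False then obtain y where "y \<in> J" "y \<notin> N" by blast
      then show ?thesis using full J by blast
    qed
  qed
  have "J = N" if J: "maximal_ideal S' J" for J
  proof -
    have JI: "is_ideal S' J" and JS: "J \<noteq> S'" and Jmax: "\<forall>K. is_ideal S' K \<and> J \<subseteq> K \<longrightarrow> K = J \<or> K = S'"
      using J by (auto simp: maximal_ideal_def)
    have "J \<subseteq> N"
    proof
      fix y assume "y \<in> J"
      show "y \<in> N"
      proof (rule ccontr)
        assume "y \<notin> N" then show False using full[OF JI \<open>y \<in> J\<close>] JS by blast
      qed
    qed
    then have "N = J \<or> N = S'" using Jmax NI by blast
    then show ?thesis using N1 one by blast
  qed
  then show ?thesis unfolding local_ring_def using maxN by blast
qed

end



lemma core_local: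
  assumes R: "is_subring R" and peri: "perinormal R" and ov: "overring R S"
    and int: "\<forall>s\<in>S. integral_over R s"
    and surj: "\<And>p. prime_ideal R p \<Longrightarrow> \<exists>P. prime_ideal S P \<and> P \<inter> R = p"
    and inj: "\<And>P1 P2. prime_ideal S P1 \<Longrightarrow> prime_ideal S P2 \<Longrightarrow> P1 \<inter> R = P2 \<inter> R \<Longrightarrow> P1 = P2"
    and q: "prime_ideal R q" and x: "x \<in> S"
  shows "\<exists>t\<in>R - q. t * x \<in> R"
proof -
  have S: "is_subring S" and RS: "R \<subseteq> S" and SF: "S \<subseteq> frac R" using ov by (auto simp: overring_def)
  obtain M where MM: "prime_ideal S M" "M \<inter> R = q" using surj[OF q] by blast
  interpret locM S M using S MM(1) by unfold_locales
  have ovS': "overring R S'" unfolding overring_def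
  proof (intro conjI)
    show "is_subring S'" by (rule sub_S')
    show "R \<subseteq> S'" using RS S_S' by blast
    show "S' \<subseteq> frac R"
    proof
      fix y assume "y \<in> S'"
      then obtain a s where a: "y = a / s" "a \<in> S" "s \<in> S - M" unfolding S'_def by (rule locE)
      then show "y \<in> frac R" using frac_div[OF R] SF by blast
    qed
  qed
  have gd: "going_down R S'" unfolding going_down_def
  proof (intro allI impI)
    fix p q' Q'
    assume H: "prime_ideal R p \<and> prime_ideal R q' \<and> p \<subset> q' \<and> prime_ideal S' Q' \<and> Q' \<inter> R = q'"
    then have p: "prime_ideal R p" and q': "prime_ideal R q'" and pq: "p \<subset> q'"
      and Q': "prime_ideal S' Q'" and Q'R: "Q' \<inter> R = q'" by auto
    have Q'I: "is_ideal S' Q'" and Q'1: "1 \<notin> Q'" using Q' by (auto simp: prime_ideal_def)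
    let ?Q = "Q' \<inter> S"
    have Qp: "prime_ideal S ?Q" unfolding prime_ideal_def is_ideal_def
    proof (intro conjI ballI impI)
      show "?Q \<subseteq> S" "0 \<in> ?Q" using sub_0[OF S] id_0[OF Q'I] by auto
      show "1 \<notin> ?Q" using Q'1 by auto
    next
      fix a b assume "a \<in> ?Q" "b \<in> ?Q" then show "a + b \<in> ?Q" using id_add[OF Q'I] sub_add[OF S] by auto
    next
      fix s a assume "s \<in> S" "a \<in> ?Q" then show "s * a \<in> ?Q" using id_mult[OF Q'I] sub_mult[OF S] S_S' by auto
    next
      fix a b assume "a \<in> S" "b \<in> S" "a * b \<in> ?Q" then show "a \<in> ?Q \<or> b \<in> ?Q"
        using Q' S_S' by (auto simp: prime_ideal_def)
    qed
    have QM: "?Q \<subseteq> M"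
    proof
      fix a assume a: "a \<in> ?Q"
      show "a \<in> M"
      proof (rule ccontr)
        assume "a \<notin> M"
        then have "1 / a \<in> S'" using inv_S' a by blast
        then have "(1 / a) * a \<in> Q'" using id_mult[OF Q'I] a by blast
        moreover have "a \<noteq> 0" using \<open>a \<notin> M\<close> M0 by auto
        ultimately show False using Q'1 by simp
      qed
    qed
    have QR: "?Q \<inter> R = q'" using Q'R RS by auto
    obtain P where P: "prime_ideal S P" "P \<inter> R = p" using surj[OF p] by blast
    have "P \<inter> R \<subseteq> q'" using P(2) pq by auto
    then obtain Q'' where Q'': "prime_ideal S Q''" "P \<subseteq> Q''" "Q'' \<inter> R = q'"
      using going_up[OF R S RS int P(1) q'] by blast
    have "Q'' = ?Q" using inj[OF Q''(1) Qp] Q''(3) QR by simp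
    then have PQ: "P \<subseteq> ?Q" using Q''(2) by simp
    let ?P = "loc_ideal P (S - M)"
    have P'p: "prime_ideal S' ?P" using loc_prime[OF P(1)] PQ QM by blast
    have P'Q: "?P \<subseteq> Q'"
    proof
      fix y assume "y \<in> ?P"
      then obtain a s where a: "y = a / s" "a \<in> P" "s \<in> S - M" by (rule locE)
      have "(1 / s) * a \<in> Q'" using id_mult[OF Q'I inv_S'[OF a(3)]] a PQ by blast
      then show "y \<in> Q'" using a by simp
    qed
    have P'R: "?P \<inter> R = p"
    proof
      show "p \<subseteq> ?P \<inter> R" using P(2) locI1 T1 by blast
      show "?P \<inter> R \<subseteq> p"
      proof
        fix r assume r: "r \<in> ?P \<inter> R"
        then obtain a s where a: "r = a / s" "a \<in> P" "s \<in> S - M" by (auto elim: locE)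
        have "r * s = a" using a nz by simp
        then have "r * s \<in> P" using a by simp
        moreover have "r \<in> S" using r RS by blast
        moreover have "s \<notin> P" using a PQ QM by blast
        ultimately have "r \<in> P" using P(1) a by (auto simp: prime_ideal_def)
        then show "r \<in> p" using P(2) r by blast
      qed
    qed
    show "\<exists>P. prime_ideal S' P \<and> P \<subseteq> Q' \<and> P \<inter> R = p" using P'p P'Q P'R by blast
  qed
  have "is_localization R S'" using peri ovS' local gd unfolding perinormal_def by blast
  then obtain T where T: "mult_closed R T" "S' = loc_ideal R T" unfolding is_localization_def by blast
  have "x \<in> S'" using x S_S' by blast
  then obtain a t where at: "x = a / t" "a \<in> R" "t \<in> T" using T(2) by (auto elim: locE)
  have tR: "t \<in> R" and t0: "t \<noteq> 0" using T(1) at by (auto simp: mult_closed_def)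
  have "t \<notin> q"
  proof
    assume "t \<in> q"
    then have "t \<in> M" using MM(2) by blast
    then have tN: "t \<in> N" unfolding N_def using locI1 T1 by blast
    have "1 / t \<in> S'" unfolding T(2) using locI sub_1[OF R] at by blast
    moreover have NI: "is_ideal S' N" using N_prime by (simp add: prime_ideal_def)
    ultimately have "(1 / t) * t \<in> N" using id_mult[OF NI _ tN] by blast
    then show False using t0 N_prime by (simp add: prime_ideal_def)
  qed
  moreover have "t * x \<in> R" using at t0 by simp
  ultimately show ?thesis using tR by blast
qed

lemma core:
  assumes R: "is_subring R" and peri: "perinormal R" and ov: "overring R S"
    and int: "\<forall>s\<in>S. integral_over R s"
    and surj: "\<And>p. prime_ideal R p \<Longrightarrow> \<exists>P. prime_ideal S P \<and> P \<inter> R = p"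
    and inj: "\<And>P1 P2. prime_ideal S P1 \<Longrightarrow> prime_ideal S P2 \<Longrightarrow> P1 \<inter> R = P2 \<inter> R \<Longrightarrow> P1 = P2"
  shows "S = R"
proof
  show "R \<subseteq> S" using ov by (simp add: overring_def)
  show "S \<subseteq> R"
  proof
    fix x assume x: "x \<in> S"
    show "x \<in> R"
    proof (rule ccontr)
      assume xR: "x \<notin> R"
      let ?I = "{r \<in> R. r * x \<in> R}"
      have I: "is_ideal R ?I" unfolding is_ideal_def
      proof (intro conjI ballI)
        show "?I \<subseteq> R" by blast
        show "0 \<in> ?I" using sub_0[OF R] by simp
      next
        fix a b assume "a \<in> ?I" "b \<in> ?I"
        then show "a + b \<in> ?I" using sub_add[OF R, of "a*x" "b*x"] sub_add[OF R, of a b]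
          by (simp add: distrib_right)
      next
        fix s a assume "s \<in> R" "a \<in> ?I"
        then show "s * a \<in> ?I" using sub_mult[OF R, of s "a*x"] sub_mult[OF R, of s a]
          by (simp add: mult.assoc)
      qed
      have T: "{1} \<subseteq> R" using sub_1[OF R] by simp
      have IT: "?I \<inter> {1} = {}" using xR by auto
      obtain Q where Q: "is_ideal R Q" "?I \<subseteq> Q" "Q \<inter> {1} = {}"
        and max: "\<forall>J. is_ideal R J \<and> Q \<subseteq> J \<and> J \<inter> {1} = {} \<longrightarrow> J = Q"
        using zorn_ideal[OF R I T IT] by blast
      have Qp: "prime_ideal R Q" using maxdisj_prime[OF R Q(1) T Q(3) _ _ max] by simp
      obtain t where t: "t \<in> R - Q" "t * x \<in> R"
        using core_local[OF R peri ov int surj inj Qp x] by blast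
      then show False using Q(2) by blast
    qed
  qed
qed



lemma frac_sub: assumes R: "is_subring R" shows "is_subring (frac R)"
  unfolding is_subring_def
proof (intro conjI ballI)
  show "0 \<in> frac R" "1 \<in> frac R" using R_frac[OF R] sub_0[OF R] sub_1[OF R] by auto
next
  fix x y assume x: "x \<in> frac R" and y: "y \<in> frac R"
  obtain a b where ab: "x = a / b" "a \<in> R" "b \<in> R" "b \<noteq> 0" using x by (rule fracE)
  obtain c d where cd: "y = c / d" "c \<in> R" "d \<in> R" "d \<noteq> 0" using y by (rule fracE)
  have bd: "b * d \<in> R" "b * d \<noteq> 0" using ab cd sub_mult[OF R] by auto
  have "x + y = (a * d + c * b) / (b * d)" unfolding ab(1) cd(1) using ab(4) cd(4) by (simp add: field_simps)
  moreover have "a * d + c * b \<in> R" using ab cd sub_mult[OF R] sub_add[OF R] by auto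
  ultimately show "x + y \<in> frac R" using fracI bd by metis
  have "x - y = (a * d - c * b) / (b * d)" unfolding ab(1) cd(1) using ab(4) cd(4) by (simp add: field_simps)
  moreover have "a * d - c * b \<in> R" using ab cd sub_mult[OF R] sub_diff[OF R] by auto
  ultimately show "x - y \<in> frac R" using fracI bd by metis
  have "x * y = (a * c) / (b * d)" unfolding ab(1) cd(1) using ab(4) cd(4) by (simp add: field_simps)
  moreover have "a * c \<in> R" using ab cd sub_mult[OF R] by auto
  ultimately show "x * y \<in> frac R" using fracI bd by metis
qed

locale semi =
  fixes R :: "'a::field set" and x :: 'a
  assumes R: "is_subring R" and xF: "x \<in> frac R" and x2: "x ^ 2 \<in> R" and x3: "x ^ 3 \<in> R"
begin

definition "S = {a + b * x | a b. a \<in> R \<and> b \<in> R}"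

lemma SI: "a \<in> R \<Longrightarrow> b \<in> R \<Longrightarrow> a + b * x \<in> S" unfolding S_def by blast
lemma SE: "s \<in> S \<Longrightarrow> (\<And>a b. s = a + b * x \<Longrightarrow> a \<in> R \<Longrightarrow> b \<in> R \<Longrightarrow> thesis) \<Longrightarrow> thesis"
  unfolding S_def by blast

lemma RS: "R \<subseteq> S" using SI[of _ 0] sub_0[OF R] by force
lemma xS: "x \<in> S" using SI[of 0 1] sub_0[OF R] sub_1[OF R] by simp

lemma subS: "is_subring S"
  unfolding is_subring_def
proof (intro conjI ballI)
  show "0 \<in> S" "1 \<in> S" using RS sub_0[OF R] sub_1[OF R] by auto
next
  fix s t assume s: "s \<in> S" and t: "t \<in> S"
  obtain a b where ab: "s = a + b * x" "a \<in> R" "b \<in> R" using s by (rule SE)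
  obtain c d where cd: "t = c + d * x" "c \<in> R" "d \<in> R" using t by (rule SE)
  have "s + t = (a + c) + (b + d) * x" using ab cd by (simp add: algebra_simps)
  then show "s + t \<in> S" using SI sub_add[OF R] ab cd by metis
  have "s - t = (a - c) + (b - d) * x" using ab cd by (simp add: algebra_simps)
  then show "s - t \<in> S" using SI sub_diff[OF R] ab cd by metis
  have "s * t = (a * c + (b * d) * x ^ 2) + (a * d + b * c) * x" using ab cd
    by (simp add: algebra_simps power2_eq_square)
  moreover have "a * c + (b * d) * x ^ 2 \<in> R" "a * d + b * c \<in> R"
    using ab cd x2 sub_add[OF R] sub_mult[OF R] by auto
  ultimately show "s * t \<in> S" using SI by metis
qed

lemma ovS: "overring R S"
  unfolding overring_def
proof (intro conjI)
  show "is_subring S" by (rule subS)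
  show "R \<subseteq> S" by (rule RS)
  show "S \<subseteq> frac R"
  proof
    fix s assume "s \<in> S"
    then obtain a b where ab: "s = a + b * x" "a \<in> R" "b \<in> R" by (rule SE)
    have "a \<in> frac R" "b \<in> frac R" using ab R_frac[OF R] by auto
    then show "s \<in> frac R" using ab(1) sub_add[OF frac_sub[OF R]] sub_mult[OF frac_sub[OF R]] xF by metis
  qed
qed

lemma intS: "\<forall>s\<in>S. integral_over R s"
proof
  fix s assume "s \<in> S"
  then obtain a b where ab: "s = a + b * x" "a \<in> R" "b \<in> R" by (rule SE)
  define c where "c i = (if i = 0 then a * a - b * b * x ^ 2 else - (2 * a))" for i :: nat
  have cR: "\<forall>i<2. c i \<in> R"
  proof (intro allI impI)
    fix i :: nat assume "i < 2"
    have "a * a - b * b * x ^ 2 \<in> R"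
      using sub_diff[OF R sub_mult[OF R ab(2) ab(2)] sub_mult[OF R sub_mult[OF R ab(3) ab(3)] x2]] .
    moreover have "- (a + a) \<in> R" using sub_uminus[OF R sub_add[OF R ab(2) ab(2)]] .
    then have "- (2 * a) \<in> R" by (metis mult_2)
    ultimately show "c i \<in> R" unfolding c_def by simp
  qed
  have sum2: "(\<Sum>i<2. c i * s ^ i) = c 0 + c 1 * s" by (simp add: numeral_2_eq_2)
  have "s ^ 2 + (c 0 + c 1 * s) = (s - a) * (s - a) - (b * x) * (b * x)"
    by (simp add: c_def power2_eq_square algebra_simps)
  also have "\<dots> = 0" using ab(1) by simp
  finally have "s ^ 2 + (\<Sum>i<2. c i * s ^ i) = 0" using sum2 by simp
  then show "integral_over R s" unfolding integral_over_def using cR by (intro exI[of _ 2] exI[of _ c]) simp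
qed

lemma x2S: assumes sS: "s \<in> S" shows "x ^ 2 * s \<in> R"
proof -
  obtain a b where ab: "s = a + b * x" "a \<in> R" "b \<in> R" using sS by (rule SE)
  have "x ^ 2 * s = a * x ^ 2 + b * x ^ 3" using ab by (simp add: algebra_simps power2_eq_square power3_eq_cube)
  then show ?thesis using ab x2 x3 sub_add[OF R] sub_mult[OF R] by metis
qed

lemma x3S: assumes sS: "s \<in> S" shows "x ^ 3 * s \<in> R"
proof -
  obtain a b where ab: "s = a + b * x" "a \<in> R" "b \<in> R" using sS by (rule SE)
  have "x ^ 3 * s = a * x ^ 3 + b * (x ^ 2 * x ^ 2)" using ab
    by (simp add: algebra_simps power2_eq_square power3_eq_cube)
  then show ?thesis using ab x2 x3 sub_add[OF R] sub_mult[OF R] by metis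
qed

lemma inj_half:
  assumes P1: "prime_ideal S P1" and P2: "prime_ideal S P2" and eq: "P1 \<inter> R = P2 \<inter> R"
  shows "P1 \<subseteq> P2"
proof
  have I1: "is_ideal S P1" and I2: "is_ideal S P2" using P1 P2 by (auto simp: prime_ideal_def)
  have x2S': "x ^ 2 \<in> S" using x2 RS by blast
  fix s assume s: "s \<in> P1"
  have sS: "s \<in> S" using s id_sub[OF I1] by blast
  show "s \<in> P2"
  proof (cases "x ^ 2 \<in> P1")
    case True
    have xx: "x * x = x ^ 2" by (simp add: power2_eq_square)
    have "x ^ 2 \<in> P2" using True eq x2 by blast
    then have "x * x \<in> P2" using xx by simp
    then have xP2: "x \<in> P2" using P2 xS unfolding prime_ideal_def by blast
    have "x * x \<in> P1" using True xx by simp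
    then have xP1: "x \<in> P1" using P1 xS unfolding prime_ideal_def by blast
    obtain a b where ab: "s = a + b * x" "a \<in> R" "b \<in> R" using sS by (rule SE)
    have bS: "b \<in> S" using ab RS by blast
    have "a = s - b * x" using ab by simp
    also have "\<dots> \<in> P1" using id_diff[OF subS I1 s id_mult[OF I1 bS xP1]] .
    finally have "a \<in> P2" using eq ab by blast
    then show ?thesis using ab id_add[OF I2 _ id_mult[OF I2 bS xP2]] by simp
  next
    case False
    have "x ^ 2 * s \<in> P1" using id_mult[OF I1 x2S' s] .
    then have "x ^ 2 * s \<in> P2" using eq x2S[OF sS] by blast
    then have "x ^ 2 \<in> P2 \<or> s \<in> P2" using P2 x2S' sS by (auto simp: prime_ideal_def)
    moreover have "x ^ 2 \<notin> P2" using False eq x2 by blast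
    ultimately show ?thesis by blast
  qed
qed

lemma surjS:
  assumes p: "prime_ideal R p" shows "\<exists>P. prime_ideal S P \<and> P \<inter> R = p"
proof -
  have pI: "is_ideal R p" and p1: "1 \<notin> p" using p by (auto simp: prime_ideal_def)
  have pp: "\<And>a b. a \<in> R \<Longrightarrow> b \<in> R \<Longrightarrow> a * b \<in> p \<Longrightarrow> a \<in> p \<or> b \<in> p"
    using p unfolding prime_ideal_def by blast
  have pR: "p \<subseteq> R" using pI by (auto simp: is_ideal_def)
  show ?thesis
  proof (cases "x ^ 2 \<in> p")
    case True
    have sq: "g \<in> p" if g: "g \<in> R" and h: "h \<in> R" and gh: "g = h * x" for g h
    proof -
      have "g ^ 2 = (h * h) * x ^ 2" using gh by (simp add: power2_eq_square algebra_simps)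
      moreover have "(h * h) * x ^ 2 \<in> p" using id_mult[OF pI sub_mult[OF R h h] True] .
      ultimately have "g ^ 2 \<in> p" by simp
      then show ?thesis using prime_power[OF p R g] by blast
    qed
    define P where "P = {a + b * x | a b. a \<in> p \<and> b \<in> R}"
    have PE: "\<And>s thesis. s \<in> P \<Longrightarrow> (\<And>a b. s = a + b * x \<Longrightarrow> a \<in> p \<Longrightarrow> b \<in> R \<Longrightarrow> thesis) \<Longrightarrow> thesis"
      unfolding P_def by blast
    have PI: "\<And>a b. a \<in> p \<Longrightarrow> b \<in> R \<Longrightarrow> a + b * x \<in> P" unfolding P_def by blast
    have ideal: "is_ideal S P" unfolding is_ideal_def
    proof (intro conjI ballI)
      show "P \<subseteq> S"
      proof
        fix s assume "s \<in> P"
        then obtain a b where ab: "s = a + b * x" "a \<in> p" "b \<in> R" by (rule PE)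
        then show "s \<in> S" using SI pR by blast
      qed
      show "0 \<in> P" using PI[OF id_0[OF pI] sub_0[OF R]] by simp
    next
      fix s t assume s: "s \<in> P" and t: "t \<in> P"
      obtain a b where ab: "s = a + b * x" "a \<in> p" "b \<in> R" using s by (rule PE)
      obtain c d where cd: "t = c + d * x" "c \<in> p" "d \<in> R" using t by (rule PE)
      have "s + t = (a + c) + (b + d) * x" using ab cd by (simp add: algebra_simps)
      moreover have "(a + c) + (b + d) * x \<in> P" using PI[OF id_add[OF pI ab(2) cd(2)] sub_add[OF R ab(3) cd(3)]] .
      ultimately show "s + t \<in> P" by simp
    next
      fix t s assume t: "t \<in> S" and s: "s \<in> P"
      obtain a b where ab: "s = a + b * x" "a \<in> p" "b \<in> R" using s by (rule PE)
      obtain c d where cd: "t = c + d * x" "c \<in> R" "d \<in> R" using t by (rule SE)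
      have aR: "a \<in> R" using ab pR by blast
      have "t * s = (c * a + (d * b) * x ^ 2) + (c * b + d * a) * x" using ab cd
        by (simp add: algebra_simps power2_eq_square)
      moreover have "c * a + (d * b) * x ^ 2 \<in> p"
        using id_add[OF pI id_mult[OF pI cd(2) ab(2)] id_mult[OF pI sub_mult[OF R cd(3) ab(3)] True]] .
      moreover have "c * b + d * a \<in> R" using sub_add[OF R sub_mult[OF R cd(2) ab(3)] sub_mult[OF R cd(3) aR]] .
      ultimately show "t * s \<in> P" using PI by simp
    qed
    have Pcap: "P \<inter> R = p"
    proof
      show "p \<subseteq> P \<inter> R"
      proof
        fix r assume r: "r \<in> p"
        have "r + 0 * x \<in> P" using PI[OF r sub_0[OF R]] .
        then show "r \<in> P \<inter> R" using r pR by auto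
      qed
      show "P \<inter> R \<subseteq> p"
      proof
        fix r assume r: "r \<in> P \<inter> R"
        then have "r \<in> P" by blast
        then obtain a b where ab: "r = a + b * x" "a \<in> p" "b \<in> R" by (rule PE)
        have aR: "a \<in> R" using ab pR by blast
        have rR: "r \<in> R" using r by blast
        have "r - a = b * x" using ab by simp
        then have "r - a \<in> p" using sq[OF sub_diff[OF R rR aR] ab(3)] by blast
        then have "(r - a) + a \<in> p" using id_add[OF pI _ ab(2)] by blast
        then show "r \<in> p" by simp
      qed
    qed
    have "prime_ideal S P" unfolding prime_ideal_def
    proof (intro conjI ballI impI)
      show "is_ideal S P" by (rule ideal)
      show "1 \<notin> P" using Pcap p1 sub_1[OF R] by blast
    next
      fix s t assume s: "s \<in> S" and t: "t \<in> S" and st: "s * t \<in> P"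
      obtain a b where ab: "s = a + b * x" "a \<in> R" "b \<in> R" using s by (rule SE)
      obtain c d where cd: "t = c + d * x" "c \<in> R" "d \<in> R" using t by (rule SE)
      obtain e f where ef: "s * t = e + f * x" "e \<in> p" "f \<in> R" using st by (rule PE)
      have eR: "e \<in> R" using ef pR by blast
      have "s * t = (a * c + (b * d) * x ^ 2) + (a * d + b * c) * x" using ab cd
        by (simp add: algebra_simps power2_eq_square)
      then have eq: "a * c + (b * d) * x ^ 2 - e = (f - (a * d + b * c)) * x" using ef
        by (simp add: algebra_simps)
      have bdR: "b * d \<in> R" using sub_mult[OF R ab(3) cd(3)] .
      have gR: "a * c + (b * d) * x ^ 2 - e \<in> R"
        using sub_diff[OF R sub_add[OF R sub_mult[OF R ab(2) cd(2)] sub_mult[OF R bdR x2]] eR] .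
      have hR: "f - (a * d + b * c) \<in> R"
        using sub_diff[OF R ef(3) sub_add[OF R sub_mult[OF R ab(2) cd(3)] sub_mult[OF R ab(3) cd(2)]]] .
      have g: "a * c + (b * d) * x ^ 2 - e \<in> p" using sq[OF gR hR eq] .
      have bdx: "(b * d) * x ^ 2 \<in> p" using id_mult[OF pI bdR True] .
      have "a * c = (a * c + (b * d) * x ^ 2 - e) - (b * d) * x ^ 2 + e" by simp
      also have "\<dots> \<in> p" using id_add[OF pI id_diff[OF R pI g bdx] ef(2)] .
      finally have "a \<in> p \<or> c \<in> p" using pp[OF ab(2) cd(2)] by blast
      then show "s \<in> P \<or> t \<in> P"
      proof
        assume "a \<in> p" then show ?thesis using PI[OF _ ab(3)] ab(1) by blast
      next
        assume "c \<in> p" then show ?thesis using PI[OF _ cd(3)] cd(1) by blast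
      qed
    qed
    then show ?thesis using Pcap by blast
  next
    case False
    define P where "P = {s \<in> S. x ^ 2 * s \<in> p}"
    have x2S': "x ^ 2 \<in> S" using x2 RS by blast
    have ideal: "is_ideal S P" unfolding is_ideal_def
    proof (intro conjI ballI)
      show "P \<subseteq> S" unfolding P_def by blast
      show "0 \<in> P" unfolding P_def using sub_0[OF subS] id_0[OF pI] by simp
    next
      fix s t assume "s \<in> P" "t \<in> P"
      then have s: "s \<in> S" "x ^ 2 * s \<in> p" and t: "t \<in> S" "x ^ 2 * t \<in> p" unfolding P_def by auto
      have "x ^ 2 * (s + t) = x ^ 2 * s + x ^ 2 * t" by (simp add: distrib_left)
      then have "x ^ 2 * (s + t) \<in> p" using id_add[OF pI s(2) t(2)] by simp
      then show "s + t \<in> P" unfolding P_def using sub_add[OF subS s(1) t(1)] by blast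
    next
      fix t s assume t: "t \<in> S" and s: "s \<in> P"
      obtain c d where cd: "t = c + d * x" "c \<in> R" "d \<in> R" using t by (rule SE)
      have u: "x ^ 2 * s \<in> p" using s unfolding P_def by blast
      have sS: "s \<in> S" using s unfolding P_def by blast
      have v: "x ^ 3 * s \<in> R" using x3S[OF sS] .
      have "(x ^ 3 * s) ^ 2 = (x ^ 2 * s) * ((x ^ 2 * s) * x ^ 2)"
        by (simp add: power2_eq_square power3_eq_cube algebra_simps)
      also have "\<dots> \<in> p" using id_mult2[OF pI sub_mult[OF R x2S[OF sS] x2] u] .
      finally have w: "x ^ 3 * s \<in> p" using prime_power[OF p R v] by blast
      have "x ^ 2 * (t * s) = c * (x ^ 2 * s) + d * (x ^ 3 * s)" using cd
        by (simp add: algebra_simps power2_eq_square power3_eq_cube)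
      also have "\<dots> \<in> p" using id_add[OF pI id_mult[OF pI cd(2) u] id_mult[OF pI cd(3) w]] .
      finally show "t * s \<in> P" unfolding P_def using sub_mult[OF subS t sS] by blast
    qed
    have Pcap: "P \<inter> R = p"
    proof
      show "p \<subseteq> P \<inter> R"
      proof
        fix r assume r: "r \<in> p"
        have "x ^ 2 * r \<in> p" using id_mult[OF pI x2 r] .
        then show "r \<in> P \<inter> R" unfolding P_def using r pR RS by blast
      qed
      show "P \<inter> R \<subseteq> p"
      proof
        fix r assume r: "r \<in> P \<inter> R"
        then have "x ^ 2 * r \<in> p" "r \<in> R" unfolding P_def by auto
        then show "r \<in> p" using pp[OF x2] False by blast
      qed
    qed
    have "prime_ideal S P" unfolding prime_ideal_def
    proof (intro conjI ballI impI)
      show "is_ideal S P" by (rule ideal)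
      show "1 \<notin> P" unfolding P_def using False by simp
    next
      fix s t assume s: "s \<in> S" and t: "t \<in> S" and st: "s * t \<in> P"
      have "x ^ 2 * (s * t) \<in> p" using st unfolding P_def by blast
      then have "x ^ 2 * (x ^ 2 * (s * t)) \<in> p" using id_mult[OF pI x2] by blast
      moreover have "(x ^ 2 * s) * (x ^ 2 * t) = x ^ 2 * (x ^ 2 * (s * t))" by (simp add: algebra_simps)
      ultimately have "(x ^ 2 * s) * (x ^ 2 * t) \<in> p" by metis
      then have "x ^ 2 * s \<in> p \<or> x ^ 2 * t \<in> p" using pp[OF x2S[OF s] x2S[OF t]] by blast
      then show "s \<in> P \<or> t \<in> P" unfolding P_def using s t by blast
    qed
    then show ?thesis using Pcap by blast
  qed
qed
end

lemma seminormal_of_perinormal: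
  assumes R: "is_subring R" and peri: "perinormal R" shows "seminormal R"
  unfolding seminormal_def
proof (intro ballI impI)
  fix x assume xF: "x \<in> frac R" and xx: "x ^ 2 \<in> R \<and> x ^ 3 \<in> R"
  interpret semi R x using R xF xx by unfold_locales auto
  have "S = R"
    using core[OF R peri ovS intS surjS] inj_half by blast
  then show "x \<in> R" using xS by blast
qed

lemma weakly_normal_of_perinormal:
  assumes R: "is_subring R" and peri: "perinormal R" shows "weakly_normal R"
  unfolding weakly_normal_def
proof (intro allI impI)
  fix S assume H: "overring R S \<and> (\<forall>x\<in>S. integral_over R x) \<and>
      bij_betw (\<lambda>P. P \<inter> R) {P. prime_ideal S P} {p. prime_ideal R p} \<and>
      (\<forall>P. prime_ideal S P \<longrightarrow> residue_purely_insep R S P)"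
  then have ov: "overring R S" and int: "\<forall>x\<in>S. integral_over R x"
    and bij: "bij_betw (\<lambda>P. P \<inter> R) {P. prime_ideal S P} {p. prime_ideal R p}" by auto
  have surj: "\<exists>P. prime_ideal S P \<and> P \<inter> R = p" if "prime_ideal R p" for p
  proof -
    have "p \<in> (\<lambda>P. P \<inter> R) ` {P. prime_ideal S P}" using bij that by (simp add: bij_betw_def)
    then show ?thesis by blast
  qed
  have inj: "P1 = P2" if "prime_ideal S P1" "prime_ideal S P2" "P1 \<inter> R = P2 \<inter> R" for P1 P2
    using bij that unfolding bij_betw_def inj_on_def by blast
  show "S = R" using core[OF R peri ov int surj inj] by blast
qed

theorem corollary3p4:
  fixes R :: "'a::field set"
  assumes "is_subring R" and "perinormal R"
  shows "weakly_normal R \<and> seminormal R"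
  using weakly_normal_of_perinormal[OF assms] seminormal_of_perinormal[OF assms] by blast

end
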